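(* Let $\gamma$ be an admissible path of length $|\gamma|$, let $n\in\mathbb N$ be such that $\theta_n=2\pi/n<|\gamma|$, let $l_n=2\sin\frac{\pi}{n}$, and let $P_n$ be the $\theta_n$-discretization of $\gamma$. Let $\mathcal U$ be the configuration at $\gamma(0)$ with direction $\gamma'(0)$ and $\mathcal V$ the configuration at $\gamma(|\gamma|)$ with direction $\gamma'(|\gamma|)$ (i.e. with vectors $l_n\gamma'(0)$ and $l_n\gamma'(|\gamma|)$). Then $P_n$ is a discrete curvature-constrained path with parameters $\theta_n$ and $l_n$ that starts at $\mathcal U$ and ends at $\mathcal V$.
   Context: An admissible path is a continuously differentiable planar curve $\gamma:[0,|\gamma|]\to\mathbb R^2$ parameterized by arclength such that for all $t<s<t+\pi$ in its domain the angle between $\gamma'(s)$ and $\gamma'(t)$ is at most $s-t$. For $0<\theta<|\gamma|$ write $|\gamma|=m\theta+\delta$ with $m=\lfloor|\gamma|/\theta\rfloor$, $0\le\delta<\theta$. The $\theta$-discretization of $\gamma$ is the polygonal path with vertices $P_i=\gamma(t_i)$, $i=0,\dots,k$, where: if $\delta=0$, then $k=m$ and $t_i=i\theta$; if $\delta>0$, then $k=m+2$, $t_0=0$, $t_1=\delta/2$, $t_i-t_{i-1}=\theta$ for $i=2,\dots,m+1$, and $t_{m+2}=|\gamma|$ (so $t_{m+2}-t_{m+1}=\delta/2$). Discrete curvature-constrained paths with parameters $\theta$ (an angle) and $\ell>0$ (a length): for a polygonal path, the turn at an internal vertex is the angle in $[0,\pi]$ between the directions of the incoming and outgoing edges; an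 edge is short if its length is $<\ell$; an edge with an adjacent edge at each end is an inflection edge if the two adjacent edges lie on opposite sides of its supporting line. The path is a discrete curvature-constrained path with parameters $\theta,\ell$ if (i) every turn is at most $\theta$; (ii) no two adjacent edges are both short; (iii) for every short non-inflection edge $ab$ with adjacent edges $a^-a$, $bb^+$, the angle between the directions of $\overrightarrow{a^-a}$ and $\overrightarrow{bb^+}$ is at most $\theta$. A configuration is a pair $(u,U)$ of a point and a vector of length $\ell$; a path with first vertex $u$ starts at $(u,U)$ if prepending the segment from $u-U$ to $u$ gives a discrete curvature-constrained path, and a path with last vertex $v$ ends at $(v,V)$ if appending the segment from $v$ to $v+V$ gives a discrete curvature-constrained path. *)

theory Defs
  imports "HOL-Analysis.Analysis"
begin

definition vec_angle :: "real^2 \<Rightarrow> real^2 \<Rightarrow> real" where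
  "vec_angle u v = arccos ((u \<bullet> v) / (norm u * norm v))"

definition cross2 :: "real^2 \<Rightarrow> real^2 \<Rightarrow> real" where
  "cross2 u v = u$1 * v$2 - u$2 * v$1"

definition admissible :: "real \<Rightarrow> (real \<Rightarrow> real^2) \<Rightarrow> (real \<Rightarrow> real^2) \<Rightarrow> bool" where
  "admissible L \<gamma> D \<longleftrightarrow>
     0 < L \<and>
     (\<forall>t\<in>{0..L}. (\<gamma> has_vector_derivative D t) (at t within {0..L})) \<and>
     continuous_on {0..L} D \<and>
     (\<forall>t\<in>{0..L}. norm (D t) = 1) \<and>
     (\<forall>t s. t \<in> {0..L} \<longrightarrow> s \<in> {0..L} \<longrightarrow> t < s \<longrightarrow> s < t + pi \<longrightarrow>
        vec_angle (D s) (D t) \<le> s - t)"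

definition discretization :: "real \<Rightarrow> real \<Rightarrow> (real \<Rightarrow> real^2) \<Rightarrow> (real^2) list" where
  "discretization \<theta> L \<gamma> =
     (let m = nat \<lfloor>L / \<theta>\<rfloor>; \<delta> = L - real m * \<theta> in
      if \<delta> = 0 then map (\<lambda>i. \<gamma> (real i * \<theta>)) [0..<m+1]
      else [\<gamma> 0] @ map (\<lambda>i. \<gamma> (\<delta> / 2 + real i * \<theta>)) [0..<m+1] @ [\<gamma> L])"

definition short_edge :: "real \<Rightarrow> real^2 \<Rightarrow> real^2 \<Rightarrow> bool" where
  "short_edge l a b \<longleftrightarrow> norm (b - a) < l"

text \<open>Edge ab with adjacent edges a'a and bb' is an inflection edge if the adjacent edges
  lie (strictly) on opposite sides of the line through a and b.\<close>
definition inflection_edge :: "real^2 \<Rightarrow> real^2 \<Rightarrow> real^2 \<Rightarrow> real^2 \<Rightarrow> bool" where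
  "inflection_edge a' a b b' \<longleftrightarrow> cross2 (b - a) (a' - a) * cross2 (b - a) (b' - a) < 0"

definition dccp :: "real \<Rightarrow> real \<Rightarrow> (real^2) list \<Rightarrow> bool" where
  "dccp \<theta> l ps \<longleftrightarrow>
     (\<forall>i. 0 < i \<and> i + 1 < length ps \<longrightarrow>
        vec_angle (ps!i - ps!(i-1)) (ps!(i+1) - ps!i) \<le> \<theta>) \<and>
     (\<forall>i. i + 2 < length ps \<longrightarrow>
        \<not> (short_edge l (ps!i) (ps!(i+1)) \<and> short_edge l (ps!(i+1)) (ps!(i+2)))) \<and>
     (\<forall>i. 0 < i \<and> i + 2 < length ps \<longrightarrow>
        short_edge l (ps!i) (ps!(i+1)) \<longrightarrow>
        \<not> inflection_edge (ps!(i-1)) (ps!i) (ps!(i+1)) (ps!(i+2)) \<longrightarrow>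
        vec_angle (ps!i - ps!(i-1)) (ps!(i+2) - ps!(i+1)) \<le> \<theta>)"

definition starts_at :: "real \<Rightarrow> real \<Rightarrow> (real^2) list \<Rightarrow> real^2 \<Rightarrow> real^2 \<Rightarrow> bool" where
  "starts_at \<theta> l ps u U \<longleftrightarrow> ps \<noteq> [] \<and> hd ps = u \<and> dccp \<theta> l ((u - U) # ps)"

definition ends_at :: "real \<Rightarrow> real \<Rightarrow> (real^2) list \<Rightarrow> real^2 \<Rightarrow> real^2 \<Rightarrow> bool" where
  "ends_at \<theta> l ps v V \<longleftrightarrow> ps \<noteq> [] \<and> last ps = v \<and> dccp \<theta> l (ps @ [v + V])"

end

theory Submission
  imports Defs
begin

lemma pw_aux:
  fixes x y w h :: real
  assumes xy: "x^2 + y^2 = 1" and xw: "cos w \<le> x" and w0: "0 \<le> w" and wh: "w \<le> 2*h"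
    and h0: "0 \<le> h" and hp: "h < pi/2"
  shows "cos h * y - sin h * x \<le> sin (w - h)"
proof (cases "0 \<le> y")
  case True
  then obtain a where a: "0 \<le> a" "a \<le> pi" "x = cos a" "y = sin a"
    using sincos_total_pi xy by blast
  have "a \<le> w" using cos_mono_le_eq[of w a] a xw w0 wh hp by linarith
  have e: "cos h * y - sin h * x = sin (a - h)" using a by (simp add: sin_diff)
  have eq: "sin (w - h) - sin (a - h) = 2 * sin ((w - a) / 2) * cos ((w + a - 2*h) / 2)"
    by (simp add: sin_diff_sin algebra_simps diff_divide_distrib add_divide_distrib)
  moreover have "0 \<le> sin ((w - a) / 2)" using \<open>a \<le> w\<close> wh hp a by (intro sin_ge_zero) auto
  moreover have "0 \<le> cos ((w + a - 2*h) / 2)" using \<open>a \<le> w\<close> wh hp a by (intro cos_ge_zero) auto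
  moreover note mult_nonneg_nonneg
  ultimately have "0 \<le> 2 * sin ((w - a) / 2) * cos ((w + a - 2*h) / 2)" by simp
  then show ?thesis using e eq by linarith
next
  case False
  then obtain a where a: "0 \<le> a" "a \<le> pi" "x = cos a" "-y = sin a"
    using sincos_total_pi[of "-y" x] xy by auto
  have "a \<le> w" using cos_mono_le_eq[of w a] a xw w0 wh hp by linarith
  have s1: "sin (-a - h) = - (sin a * cos h + cos a * sin h)"
  proof -
    have "-a-h = -(a+h)" by simp
    then show ?thesis by (simp only: sin_minus sin_add)
  qed
  have ys: "y = - sin a" using a(4) by simp
  have e: "cos h * y - sin h * x = sin (- a - h)"
    unfolding s1 ys a(3) by (simp add: algebra_simps)
  have eq: "sin (w - h) - sin (-a - h) = 2 * sin ((w + a) / 2) * cos ((w - a - 2*h) / 2)"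
    by (simp add: sin_diff_sin algebra_simps diff_divide_distrib add_divide_distrib)
  moreover have "0 \<le> sin ((w + a) / 2)" using \<open>a \<le> w\<close> wh hp a by (intro sin_ge_zero) auto
  moreover have "0 \<le> cos ((w - a - 2*h) / 2)" using \<open>a \<le> w\<close> wh hp a by (intro cos_ge_zero) auto
  moreover note mult_nonneg_nonneg
  ultimately have "0 \<le> 2 * sin ((w + a) / 2) * cos ((w - a - 2*h) / 2)" by simp
  then show ?thesis using e eq by linarith
qed

definition perp :: "real^2 \<Rightarrow> real^2" where
  "perp u = (\<chi> i. if i = 1 then - u$2 else u$1)"

lemma inner2: "(v::real^2) \<bullet> w = v$1 * w$1 + v$2 * w$2"
  by (simp add: inner_vec_def sum_2)

lemma cross_perp: "cross2 u v = perp u \<bullet> v"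
  by (simp add: cross2_def perp_def inner2)

lemma norm2sq: "(norm (v::real^2))^2 = v$1^2 + v$2^2"
proof -
  have "(norm v)^2 = v \<bullet> v" by (rule power2_norm_eq_inner)
  then show ?thesis by (simp add: inner2 power2_eq_square)
qed

lemma unit2: "norm (u::real^2) = 1 \<Longrightarrow> u$1^2 + u$2^2 = 1"
  using norm2sq[of u] by simp

lemma pyth2:
  assumes "norm (u::real^2) = 1"
  shows "(v \<bullet> u)^2 + (cross2 u v)^2 = (norm v)^2"
proof -
  have "(v \<bullet> u)^2 + (cross2 u v)^2 = (u$1^2 + u$2^2) * (v$1^2 + v$2^2)"
    by (simp add: inner2 cross2_def power2_eq_square algebra_simps)
  then show ?thesis using unit2[OF assms] norm2sq[of v] by simp
qed

lemma dot2:
  assumes "norm (u::real^2) = 1"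
  shows "v \<bullet> w = (v \<bullet> u) * (w \<bullet> u) + cross2 u v * cross2 u w"
proof -
  have "(v \<bullet> u) * (w \<bullet> u) + cross2 u v * cross2 u w = (u$1^2 + u$2^2) * (v \<bullet> w)"
    by (simp add: inner2 cross2_def power2_eq_square algebra_simps)
  then show ?thesis using unit2[OF assms] by simp
qed

lemma vec_angle_sym: "vec_angle u v = vec_angle v u"
  by (simp add: vec_angle_def inner_commute mult.commute)

lemma vec_angle_le_pi: "vec_angle u v \<le> pi"
proof -
  have "\<bar>(u \<bullet> v) / (norm u * norm v)\<bar> \<le> 1"
  proof (cases "norm u * norm v = 0")
    case True then show ?thesis by auto
  next
    case False
    then have p: "0 < norm u * norm v" by (simp add: order_less_le)
    have "\<bar>u \<bullet> v\<bar> \<le> norm u * norm v" by (rule Cauchy_Schwarz_ineq2)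
    then show ?thesis using p by (simp add: abs_divide pos_divide_le_eq)
  qed
  then have "-1 \<le> (u \<bullet> v) / (norm u * norm v)" "(u \<bullet> v) / (norm u * norm v) \<le> 1"
    by (simp_all only: abs_le_iff) linarith+
  then show ?thesis unfolding vec_angle_def by (intro arccos_ubound)
qed

definition incone :: "real^2 \<Rightarrow> real \<Rightarrow> real^2 \<Rightarrow> bool" where
  "incone u h v \<longleftrightarrow> 0 < v \<bullet> u \<and> \<bar>cross2 u v\<bar> \<le> tan h * (v \<bullet> u)"

lemma arctan_bound:
  assumes "\<bar>z\<bar> \<le> tan a" "0 \<le> a" "a < pi/2"
  shows "\<bar>arctan z\<bar> \<le> a"
proof -
  have "arctan z \<le> arctan (tan a)" using assms by (simp add: arctan_le_iff)
  moreover have "arctan (- tan a) \<le> arctan z" using assms by (simp add: arctan_le_iff)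
  ultimately show ?thesis using arctan_tan[of a] assms by (simp add: arctan_minus)
qed

lemma cone_repr:
  assumes u: "norm u = 1" and X: "0 < v \<bullet> u"
  shows "cos (arctan (cross2 u v / (v \<bullet> u))) = (v \<bullet> u) / norm v"
    and "sin (arctan (cross2 u v / (v \<bullet> u))) = cross2 u v / norm v"
proof -
  let ?X = "v \<bullet> u" and ?Y = "cross2 u v"
  have nv: "norm v = sqrt (?X^2 + ?Y^2)" using pyth2[OF u, of v] by simp
  have "1 + (?Y / ?X)^2 = (?X^2 + ?Y^2) / ?X^2" using X by (simp add: field_simps)
  then have s: "sqrt (1 + (?Y / ?X)^2) = norm v / ?X"
    using X nv by (simp add: real_sqrt_divide)
  have "v \<noteq> 0" using X by auto
  then have nvp: "0 < norm v" by simp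
  show "cos (arctan (?Y / ?X)) = ?X / norm v" using s X nvp by (simp add: cos_arctan)
  show "sin (arctan (?Y / ?X)) = ?Y / norm v" using s X nvp by (simp add: sin_arctan)
qed

lemma ang:
  assumes u: "norm u = 1" and cv: "incone u a v" and cw: "incone u b w"
    and a: "0 \<le> a" "a < pi/2" and b: "0 \<le> b" "b < pi/2"
  shows "vec_angle v w \<le> a + b"
proof -
  define A where "A = arctan (cross2 u v / (v \<bullet> u))"
  define B where "B = arctan (cross2 u w / (w \<bullet> u))"
  have X: "0 < v \<bullet> u" and X': "0 < w \<bullet> u" using cv cw by (auto simp: incone_def)
  have "v \<noteq> 0" "w \<noteq> 0" using X X' by auto
  then have nv: "0 < norm v" and nw: "0 < norm w" by auto
  have cA: "cos A = (v \<bullet> u) / norm v" and sA: "sin A = cross2 u v / norm v"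
    using cone_repr[OF u X] by (auto simp: A_def)
  have cB: "cos B = (w \<bullet> u) / norm w" and sB: "sin B = cross2 u w / norm w"
    using cone_repr[OF u X'] by (auto simp: B_def)
  have "(v \<bullet> w) / (norm v * norm w) = cos A * cos B + sin A * sin B"
    using nv nw by (simp add: cA cB sA sB dot2[OF u, of v w] add_divide_distrib)
  also have "\<dots> = cos \<bar>A - B\<bar>" by (simp add: cos_diff)
  finally have e: "vec_angle v w = arccos (cos \<bar>A - B\<bar>)" by (simp add: vec_angle_def)
  have "\<bar>cross2 u v / (v \<bullet> u)\<bar> \<le> tan a"
  proof -
    have "\<bar>cross2 u v\<bar> \<le> tan a * (v \<bullet> u)" using cv by (simp add: incone_def)
    then show ?thesis using X by (simp add: abs_divide pos_divide_le_eq)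
  qed
  then have hA: "\<bar>A\<bar> \<le> a" unfolding A_def using arctan_bound a by blast
  have "\<bar>cross2 u w / (w \<bullet> u)\<bar> \<le> tan b"
  proof -
    have "\<bar>cross2 u w\<bar> \<le> tan b * (w \<bullet> u)" using cw by (simp add: incone_def)
    then show ?thesis using X' by (simp add: abs_divide pos_divide_le_eq)
  qed
  then have hB: "\<bar>B\<bar> \<le> b" unfolding B_def using arctan_bound b by blast
  have "\<bar>A - B\<bar> \<le> pi" using hA hB a b by linarith
  then have "arccos (cos \<bar>A - B\<bar>) = \<bar>A - B\<bar>" by (intro arccos_cos) auto
  then have "vec_angle v w = \<bar>A - B\<bar>" using e by simp
  then show ?thesis using hA hB by linarith
qed

lemma cos_le_of_angle:
  assumes "norm u = 1" "norm d = 1" "vec_angle u d \<le> h" "0 \<le> h" "h \<le> pi"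
  shows "cos h \<le> d \<bullet> u"
proof -
  have x: "\<bar>u \<bullet> d\<bar> \<le> 1" using Cauchy_Schwarz_ineq2[of u d] assms by simp
  have "vec_angle u d = arccos (u \<bullet> d)" using assms by (simp add: vec_angle_def)
  then have "arccos (u \<bullet> d) \<le> h" using assms by simp
  moreover have "0 \<le> arccos (u \<bullet> d)" using x by (intro arccos_lbound) (auto simp: abs_le_iff)
  ultimately have "cos h \<le> cos (arccos (u \<bullet> d))"
    using assms(5) by (intro cos_monotone_0_pi_le) 
  also have "\<dots> = u \<bullet> d" using x by (rule cos_arccos_abs)
  finally show ?thesis by (simp add: inner_commute)
qed

lemma virt:
  assumes u: "norm u = 1" and d: "norm d = 1" and ang: "vec_angle u d \<le> h"
    and h: "0 \<le> h" "h < pi/2" and l: "0 < l"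
  shows "incone u h (l *\<^sub>R d)"
proof -
  have x: "cos h \<le> d \<bullet> u" using cos_le_of_angle[OF u d ang] h by simp
  have ch: "0 < cos h" using h by (intro cos_gt_zero_pi) auto
  have py: "(d \<bullet> u)^2 + (cross2 u d)^2 = 1" using pyth2[OF u, of d] d by simp
  have "(cos h)^2 \<le> (d \<bullet> u)^2" using x ch by (intro power_mono) auto
  then have "(cross2 u d)^2 \<le> (sin h)^2" using py sin_cos_squared_add[of h] by linarith
  then have "\<bar>cross2 u d\<bar> \<le> \<bar>sin h\<bar>" by (simp only: abs_le_square_iff)
  moreover have "0 \<le> sin h" using h by (intro sin_ge_zero) auto
  ultimately have "\<bar>cross2 u d\<bar> \<le> sin h" by simp
  also have "sin h = tan h * cos h" using ch by (simp add: tan_def)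
  also have "\<dots> \<le> tan h * (d \<bullet> u)" using x h \<open>0 \<le> sin h\<close> ch by (intro mult_left_mono) (auto simp: tan_def)
  finally have c: "\<bar>cross2 u d\<bar> \<le> tan h * (d \<bullet> u)" .
  have "cross2 u (l *\<^sub>R d) = l * cross2 u d" by (simp add: cross2_def algebra_simps)
  moreover have "l * \<bar>cross2 u d\<bar> \<le> l * (tan h * (d \<bullet> u))" using c l by (intro mult_left_mono) auto
  moreover have "0 < l * (d \<bullet> u)" using x ch l by (intro mult_pos_pos) auto
  ultimately show ?thesis using l unfolding incone_def
    by (simp add: abs_mult algebra_simps)
qed

lemma ftc_real:
  fixes F f :: "real \<Rightarrow> real"
  assumes "a \<le> b" "\<And>x. (F has_real_derivative f x) (at x)"
  shows "(f has_integral (F b - F a)) {a..b}"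
  using assms(1) 
  by (intro fundamental_theorem_of_calculus)
     (auto simp: has_real_derivative_iff_has_vector_derivative[symmetric]
           intro: has_field_derivative_at_within assms(2))

lemma chord_core:
  fixes D :: "real \<Rightarrow> real^2" and w :: "real \<Rightarrow> real"
  assumes int: "(D has_integral c) {a..b}"
    and unit: "\<And>t. t \<in> {a..b} \<Longrightarrow> norm (D t) = 1" and u: "norm u = 1"
    and wt: "\<And>t. t \<in> {a..b} \<Longrightarrow> 0 \<le> w t \<and> w t \<le> b - a \<and> vec_angle u (D t) \<le> w t"
    and s: "b - a < pi" and ab: "a \<le> b"
    and icos: "((\<lambda>t. cos (w t)) has_integral Ic) {a..b}"
    and isin: "((\<lambda>t. sin (w t - (b-a)/2)) has_integral 0) {a..b}"
  shows "Ic \<le> c \<bullet> u" and "\<bar>cross2 u c\<bar> * cos ((b-a)/2) \<le> sin ((b-a)/2) * (c \<bullet> u)"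
proof -
  define h where "h = (b - a) / 2"
  have iX: "((\<lambda>t. D t \<bullet> u) has_integral c \<bullet> u) {a..b}"
    using has_integral_linear[OF int bounded_linear_inner_left[of u]] by (simp add: o_def)
  have iY: "((\<lambda>t. cross2 u (D t)) has_integral cross2 u c) {a..b}"
    using has_integral_linear[OF int bounded_linear_inner_right[of "perp u"]]
    by (simp add: o_def cross_perp)
  show "Ic \<le> c \<bullet> u"
  proof (rule has_integral_le[OF icos iX])
    fix t assume t: "t \<in> {a..b}"
    show "cos (w t) \<le> D t \<bullet> u" using wt[OF t] unit[OF t] u s
      by (intro cos_le_of_angle) auto
  qed
  have h0: "0 \<le> h" "h < pi/2" using ab s by (auto simp: h_def)
  have pt: "cos h * y - sin h * (D t \<bullet> u) \<le> sin (w t - h)"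
    if t: "t \<in> {a..b}" and y: "y = cross2 u (D t) \<or> y = - cross2 u (D t)" for t y
  proof (rule pw_aux)
    have "(D t \<bullet> u)^2 + (cross2 u (D t))^2 = 1" using pyth2[OF u, of "D t"] unit[OF t] by simp
    then show "(D t \<bullet> u)^2 + y^2 = 1" using y by auto
    show "cos (w t) \<le> D t \<bullet> u" using wt[OF t] unit[OF t] u s
      by (intro cos_le_of_angle) auto
    show "0 \<le> w t" "w t \<le> 2 * h" using wt[OF t] by (auto simp: h_def)
  qed (use h0 in auto)
  have i1: "((\<lambda>t. cos h * cross2 u (D t) - sin h * (D t \<bullet> u)) has_integral
      (cos h * cross2 u c - sin h * (c \<bullet> u))) {a..b}"
    by (intro has_integral_diff has_integral_mult_right iX iY)
  have i2: "((\<lambda>t. cos h * (- cross2 u (D t)) - sin h * (D t \<bullet> u)) has_integral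
      (cos h * (- cross2 u c) - sin h * (c \<bullet> u))) {a..b}"
    by (intro has_integral_diff has_integral_mult_right has_integral_neg iX iY)
  have isin': "((\<lambda>t. sin (w t - h)) has_integral 0) {a..b}" using isin by (simp add: h_def)
  have "cos h * cross2 u c - sin h * (c \<bullet> u) \<le> 0"
    by (rule has_integral_le[OF i1 isin']) (use pt in auto)
  moreover have "cos h * (- cross2 u c) - sin h * (c \<bullet> u) \<le> 0"
    by (rule has_integral_le[OF i2 isin']) (use pt[where y="- cross2 u (D _)"] in auto)
  ultimately show "\<bar>cross2 u c\<bar> * cos ((b-a)/2) \<le> sin ((b-a)/2) * (c \<bullet> u)"
    unfolding h_def[symmetric] by (simp add: abs_if algebra_simps)
qed

lemma adm_D:
  assumes "admissible L \<gamma> D" "t \<in> {0..L}"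
  shows "norm (D t) = 1"
  using assms by (auto simp: admissible_def)

lemma ftc_gamma:
  assumes adm: "admissible L \<gamma> D" and ab: "0 \<le> a" "a \<le> b" "b \<le> L"
  shows "(D has_integral (\<gamma> b - \<gamma> a)) {a..b}"
proof (rule fundamental_theorem_of_calculus[OF ab(2)])
  fix x assume x: "x \<in> {a..b}"
  then have "(\<gamma> has_vector_derivative D x) (at x within {0..L})"
    using adm ab by (auto simp: admissible_def)
  then show "(\<gamma> has_vector_derivative D x) (at x within {a..b})"
    by (rule has_vector_derivative_within_subset) (use ab in auto)
qed

lemma vec_angle_self: "norm v = 1 \<Longrightarrow> vec_angle v v = 0"
  by (simp add: vec_angle_def power2_norm_eq_inner[symmetric])

lemma adm_angle:
  assumes adm: "admissible L \<gamma> D" and t: "t \<in> {0..L}" and s: "s \<in> {0..L}" and ts: "\<bar>s - t\<bar> < pi"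
  shows "vec_angle (D t) (D s) \<le> \<bar>s - t\<bar>"
proof (cases s t rule: linorder_cases)
  case less
  then have "vec_angle (D t) (D s) \<le> t - s" using adm t s ts by (auto simp: admissible_def)
  then show ?thesis using less by simp
next
  case equal
  then show ?thesis using vec_angle_self[OF adm_D[OF adm t]] by simp
next
  case greater
  then have "vec_angle (D s) (D t) \<le> s - t" using adm t s ts by (auto simp: admissible_def)
  then show ?thesis using greater by (simp add: vec_angle_sym)
qed

lemma incone_of:
  assumes X: "sin s \<le> c \<bullet> u" and Y: "\<bar>cross2 u c\<bar> * cos (s/2) \<le> sin (s/2) * (c \<bullet> u)"
    and s: "0 < s" "s < pi"
  shows "incone u (s/2) c"
proof -
  have "0 < sin s" using s by (intro sin_gt_zero) auto
  then have X0: "0 < c \<bullet> u" using X by linarith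
  have ch: "0 < cos (s/2)" using s by (intro cos_gt_zero_pi) auto
  have "\<bar>cross2 u c\<bar> \<le> sin (s/2) * (c \<bullet> u) / cos (s/2)" using Y ch by (simp add: pos_le_divide_eq)
  also have "\<dots> = tan (s/2) * (c \<bullet> u)" by (simp add: tan_def)
  finally show ?thesis using X0 by (simp add: incone_def)
qed

lemma chord_fwd:
  assumes adm: "admissible L \<gamma> D" and ab: "0 \<le> a" "a < b" "b \<le> L" "b - a < pi"
  shows "sin (b - a) \<le> (\<gamma> b - \<gamma> a) \<bullet> D a"
    and "incone (D a) ((b - a)/2) (\<gamma> b - \<gamma> a)"
proof -
  have aL: "a \<in> {0..L}" using ab by auto
  have icos: "((\<lambda>t. cos (t - a)) has_integral sin (b - a)) {a..b}"
  proof -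
    have "((\<lambda>t. cos (t - a)) has_integral ((\<lambda>t. sin (t - a)) b - (\<lambda>t. sin (t - a)) a)) {a..b}"
      by (rule ftc_real) (use ab in \<open>auto intro!: derivative_eq_intros\<close>)
    then show ?thesis by simp
  qed
  have isin: "((\<lambda>t. sin (t - a - (b-a)/2)) has_integral 0) {a..b}"
  proof -
    have "((\<lambda>t. sin (t - a - (b-a)/2)) has_integral ((\<lambda>t. - cos (t - a - (b-a)/2)) b - (\<lambda>t. - cos (t - a - (b-a)/2)) a)) {a..b}"
      by (rule ftc_real) (use ab in \<open>auto intro!: derivative_eq_intros\<close>)
    moreover have "b - a - (b-a)/2 = (b-a)/2" "a - a - (b-a)/2 = - ((b-a)/2)" by (simp_all add: field_simps)
    ultimately show ?thesis by (simp only: cos_minus) (simp add: field_simps)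
  qed
  have wt: "0 \<le> t - a \<and> t - a \<le> b - a \<and> vec_angle (D a) (D t) \<le> t - a" if t: "t \<in> {a..b}" for t
  proof -
    have "vec_angle (D a) (D t) \<le> \<bar>t - a\<bar>" using t ab by (intro adm_angle[OF adm]) auto
    then show ?thesis using t by auto
  qed
  have unit: "norm (D t) = 1" if "t \<in> {a..b}" for t using that ab by (intro adm_D[OF adm]) auto
  note core = chord_core[where w="\<lambda>t. t - a", OF ftc_gamma[OF adm ab(1) _ ab(3)] unit adm_D[OF adm aL] wt ab(4) _ icos isin]
  show "sin (b - a) \<le> (\<gamma> b - \<gamma> a) \<bullet> D a" using core ab by simp
  show "incone (D a) ((b - a)/2) (\<gamma> b - \<gamma> a)"
    using incone_of[OF core[OF less_imp_le[OF ab(2)]] ] ab by simp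
qed

lemma chord_bwd:
  assumes adm: "admissible L \<gamma> D" and ab: "0 \<le> a" "a < b" "b \<le> L" "b - a < pi"
  shows "sin (b - a) \<le> (\<gamma> b - \<gamma> a) \<bullet> D b"
    and "incone (D b) ((b - a)/2) (\<gamma> b - \<gamma> a)"
proof -
  have bL: "b \<in> {0..L}" using ab by auto
  have icos: "((\<lambda>t. cos (b - t)) has_integral sin (b - a)) {a..b}"
  proof -
    have "((\<lambda>t. cos (b - t)) has_integral ((\<lambda>t. - sin (b - t)) b - (\<lambda>t. - sin (b - t)) a)) {a..b}"
      by (rule ftc_real) (use ab in \<open>auto intro!: derivative_eq_intros\<close>)
    then show ?thesis by simp
  qed
  have isin: "((\<lambda>t. sin (b - t - (b-a)/2)) has_integral 0) {a..b}"
  proof -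
    have "((\<lambda>t. sin (b - t - (b-a)/2)) has_integral ((\<lambda>t. cos (b - t - (b-a)/2)) b - (\<lambda>t. cos (b - t - (b-a)/2)) a)) {a..b}"
      by (rule ftc_real) (use ab in \<open>auto intro!: derivative_eq_intros\<close>)
    moreover have "b - a - (b-a)/2 = (b-a)/2" "b - b - (b-a)/2 = - ((b-a)/2)" by (simp_all add: field_simps)
    ultimately show ?thesis by (simp only: cos_minus) (simp add: field_simps)
  qed
  have wt: "0 \<le> b - t \<and> b - t \<le> b - a \<and> vec_angle (D b) (D t) \<le> b - t" if t: "t \<in> {a..b}" for t
  proof -
    have "vec_angle (D b) (D t) \<le> \<bar>t - b\<bar>" using t ab by (intro adm_angle[OF adm]) auto
    then show ?thesis using t by auto
  qed
  have unit: "norm (D t) = 1" if "t \<in> {a..b}" for t using that ab by (intro adm_D[OF adm]) auto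
  note core = chord_core[where w="\<lambda>t. b - t", OF ftc_gamma[OF adm ab(1) _ ab(3)] unit adm_D[OF adm bL] wt ab(4) _ icos isin]
  show "sin (b - a) \<le> (\<gamma> b - \<gamma> a) \<bullet> D b" using core ab by simp
  show "incone (D b) ((b - a)/2) (\<gamma> b - \<gamma> a)"
    using incone_of[OF core[OF less_imp_le[OF ab(2)]] ] ab by simp
qed

lemma chord_len:
  assumes adm: "admissible L \<gamma> D" and ab: "0 \<le> a" "a < b" "b \<le> L" "b - a \<le> pi"
  shows "2 * sin ((b - a)/2) \<le> norm (\<gamma> b - \<gamma> a)"
proof -
  define m where "m = (a + b) / 2"
  have m: "a < m" "m < b" "m - a = (b - a)/2" "b - m = (b - a)/2" using ab by (auto simp: m_def field_simps)
  have "sin ((b - a)/2) \<le> (\<gamma> m - \<gamma> a) \<bullet> D m"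
    using chord_bwd(1)[OF adm ab(1) m(1)] m ab by (simp add: m(3))
  moreover have "sin ((b - a)/2) \<le> (\<gamma> b - \<gamma> m) \<bullet> D m"
    using chord_fwd(1)[OF adm _ m(2) ab(3)] m ab by (simp add: m(4))
  ultimately have "2 * sin ((b - a)/2) \<le> (\<gamma> b - \<gamma> a) \<bullet> D m"
    by (simp add: inner_diff_left)
  also have "\<dots> \<le> norm (\<gamma> b - \<gamma> a) * norm (D m)" by (rule norm_cauchy_schwarz)
  also have "norm (D m) = 1" using m ab by (intro adm_D[OF adm]) auto
  finally show ?thesis by simp
qed

lemma dccp_tl: "dccp \<theta> l (x # ps) \<Longrightarrow> dccp \<theta> l ps"
  unfolding dccp_def
proof (elim conjE, intro conjI allI impI)
  fix i
  assume A: "\<forall>i. 0 < i \<and> i + 1 < length (x # ps) \<longrightarrow>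
      vec_angle ((x # ps) ! i - (x # ps) ! (i - 1)) ((x # ps) ! (i + 1) - (x # ps) ! i) \<le> \<theta>"
  assume i: "0 < i \<and> i + 1 < length ps"
  then show "vec_angle (ps ! i - ps ! (i - 1)) (ps ! (i + 1) - ps ! i) \<le> \<theta>"
    using A[rule_format, of "Suc i"] by (cases i) auto
next
  fix i
  assume B: "\<forall>i. i + 2 < length (x # ps) \<longrightarrow>
      \<not> (short_edge l ((x # ps) ! i) ((x # ps) ! (i + 1)) \<and> short_edge l ((x # ps) ! (i + 1)) ((x # ps) ! (i + 2)))"
  assume "i + 2 < length ps"
  then show "\<not> (short_edge l (ps ! i) (ps ! (i + 1)) \<and> short_edge l (ps ! (i + 1)) (ps ! (i + 2)))"
    using B[rule_format, of "Suc i"] by auto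
next
  fix i
  assume C: "\<forall>i. 0 < i \<and> i + 2 < length (x # ps) \<longrightarrow>
      short_edge l ((x # ps) ! i) ((x # ps) ! (i + 1)) \<longrightarrow>
      \<not> inflection_edge ((x # ps) ! (i - 1)) ((x # ps) ! i) ((x # ps) ! (i + 1)) ((x # ps) ! (i + 2)) \<longrightarrow>
      vec_angle ((x # ps) ! i - (x # ps) ! (i - 1)) ((x # ps) ! (i + 2) - (x # ps) ! (i + 1)) \<le> \<theta>"
  assume "0 < i \<and> i + 2 < length ps" "short_edge l (ps ! i) (ps ! (i + 1))"
    "\<not> inflection_edge (ps ! (i - 1)) (ps ! i) (ps ! (i + 1)) (ps ! (i + 2))"
  then show "vec_angle (ps ! i - ps ! (i - 1)) (ps ! (i + 2) - ps ! (i + 1)) \<le> \<theta>"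
    using C[rule_format, of "Suc i"] by (cases i) auto
qed

lemma dccp_butlast: "dccp \<theta> l (ps @ [x]) \<Longrightarrow> dccp \<theta> l ps"
  unfolding dccp_def
proof (elim conjE, intro conjI allI impI)
  fix i
  assume A: "\<forall>i. 0 < i \<and> i + 1 < length (ps @ [x]) \<longrightarrow>
      vec_angle ((ps @ [x]) ! i - (ps @ [x]) ! (i - 1)) ((ps @ [x]) ! (i + 1) - (ps @ [x]) ! i) \<le> \<theta>"
  assume i: "0 < i \<and> i + 1 < length ps"
  then show "vec_angle (ps ! i - ps ! (i - 1)) (ps ! (i + 1) - ps ! i) \<le> \<theta>"
    using A[rule_format, of i] by (auto simp: nth_append less_imp_diff_less)
next
  fix i
  assume B: "\<forall>i. i + 2 < length (ps @ [x]) \<longrightarrow>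
      \<not> (short_edge l ((ps @ [x]) ! i) ((ps @ [x]) ! (i + 1)) \<and> short_edge l ((ps @ [x]) ! (i + 1)) ((ps @ [x]) ! (i + 2)))"
  assume "i + 2 < length ps"
  then show "\<not> (short_edge l (ps ! i) (ps ! (i + 1)) \<and> short_edge l (ps ! (i + 1)) (ps ! (i + 2)))"
    using B[rule_format, of i] by (auto simp: nth_append less_imp_diff_less)
next
  fix i
  assume C: "\<forall>i. 0 < i \<and> i + 2 < length (ps @ [x]) \<longrightarrow>
      short_edge l ((ps @ [x]) ! i) ((ps @ [x]) ! (i + 1)) \<longrightarrow>
      \<not> inflection_edge ((ps @ [x]) ! (i - 1)) ((ps @ [x]) ! i) ((ps @ [x]) ! (i + 1)) ((ps @ [x]) ! (i + 2)) \<longrightarrow>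
      vec_angle ((ps @ [x]) ! i - (ps @ [x]) ! (i - 1)) ((ps @ [x]) ! (i + 2) - (ps @ [x]) ! (i + 1)) \<le> \<theta>"
  assume "0 < i \<and> i + 2 < length ps" "short_edge l (ps ! i) (ps ! (i + 1))"
    "\<not> inflection_edge (ps ! (i - 1)) (ps ! i) (ps ! (i + 1)) (ps ! (i + 2))"
  then show "vec_angle (ps ! i - ps ! (i - 1)) (ps ! (i + 2) - ps ! (i + 1)) \<le> \<theta>"
    using C[rule_format, of i] by (auto simp: nth_append less_imp_diff_less)
qed

context
  fixes L \<theta> l :: real and \<gamma> D :: "real \<Rightarrow> real^2" and T :: "nat \<Rightarrow> real" and N :: nat
    and E :: "nat \<Rightarrow> real^2"
  assumes adm: "admissible L \<gamma> D"
    and th0: "0 < \<theta>"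
    and N3: "3 \<le> N"
    and T0: "T 0 = 0" and TN: "T (N - 1) = L"
    and Tmono: "\<And>j. j + 1 < N \<Longrightarrow> T j < T (Suc j)"
    and Tgap: "\<And>j. j + 1 < N \<Longrightarrow> T (Suc j) - T j \<le> \<theta>"
    and Tint: "\<And>j. 0 < j \<Longrightarrow> j + 2 < N \<Longrightarrow> T (Suc j) - T j = \<theta>"
    and Tadj: "\<And>j. j + 2 < N \<Longrightarrow> T (Suc j) - T j = \<theta> \<or> T (Suc (Suc j)) - T (Suc j) = \<theta>"
    and Tfirst: "T 1 - T 0 < \<theta> \<Longrightarrow> 2 * (T 1 - T 0) \<le> \<theta>"
    and Tlast: "T (N - 1) - T (N - 2) < \<theta> \<Longrightarrow> 2 * (T (N - 1) - T (N - 2)) \<le> \<theta>"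
    and Trange: "\<And>j. j < N \<Longrightarrow> 0 \<le> T j \<and> T j \<le> L"
    and lcase: "l = 0 \<or> (\<theta> \<le> pi \<and> 0 < l \<and> l \<le> 2 * sin (\<theta>/2))"
    and l0: "l = 0 \<Longrightarrow> pi \<le> \<theta>"
    and Edef: "E = (\<lambda>i. if i = 0 then \<gamma> 0 - l *\<^sub>R D 0 else if i \<le> N then \<gamma> (T (i - 1))
                      else \<gamma> L + l *\<^sub>R D L)"
begin

lemma l_nonneg: "0 \<le> l" using lcase by auto

lemma unitD: "t \<in> {0..L} \<Longrightarrow> norm (D t) = 1" by (rule adm_D[OF adm])

lemma L0: "0 \<le> L" using Trange[of 0] N3 by auto

lemma E0: "E 1 - E 0 = l *\<^sub>R D 0" using N3 by (simp add: Edef T0)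
lemma EN: "E (Suc N) - E N = l *\<^sub>R D L" using N3 TN by (simp add: Edef)
lemma Emid: "1 \<le> i \<Longrightarrow> i + 1 \<le> N \<Longrightarrow> E (Suc i) - E i = \<gamma> (T i) - \<gamma> (T (i - 1))"
  by (simp add: Edef)

lemma gap_pos: "1 \<le> i \<Longrightarrow> i + 1 \<le> N \<Longrightarrow> T (i - 1) < T i"
  using Tmono[of "i - 1"] by simp

lemma gap_le: "1 \<le> i \<Longrightarrow> i + 1 \<le> N \<Longrightarrow> T i - T (i - 1) \<le> \<theta>"
  using Tgap[of "i - 1"] by simp

context
  assumes thpi: "\<theta> < pi"
begin

lemma lpos: "0 < l" using l0 thpi lcase by linarith

lemma in_cone:
  assumes i: "1 \<le> i" "i \<le> N"
  shows "incone (D (T (i - 1))) (if i = 1 then 0 else (T (i - 1) - T (i - 2))/2) (E i - E (i - 1))"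
proof (cases "i = 1")
  case True
  have u: "norm (D 0) = 1" using unitD L0 by auto
  show ?thesis using True E0 T0 virt[OF u u _ _ _ lpos] vec_angle_self[OF u] by simp
next
  case False
  then obtain k where k: "i = Suc (Suc k)" using i by (cases i; cases "i - 1") auto
  have e: "E i - E (i - 1) = \<gamma> (T (i - 1)) - \<gamma> (T (i - 2))"
    using Emid[of "Suc k"] i k by simp
  have a: "T (i - 2) < T (i - 1)" using gap_pos[of "Suc k"] i k by simp
  have g: "T (i - 1) - T (i - 2) \<le> \<theta>" using gap_le[of "Suc k"] i k by simp
  have r: "0 \<le> T (i - 2)" "T (i - 1) \<le> L" using Trange[of "i-2"] Trange[of "i - 1"] i by auto
  show ?thesis using False e chord_bwd(2)[OF adm r(1) a r(2)] g thpi by simp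
qed

lemma out_cone:
  assumes i: "1 \<le> i" "i \<le> N"
  shows "incone (D (T (i - 1))) (if i = N then 0 else (T i - T (i - 1))/2) (E (Suc i) - E i)"
proof (cases "i = N")
  case True
  have u: "norm (D L) = 1" using unitD L0 by auto
  show ?thesis using True EN TN virt[OF u u _ _ _ lpos] vec_angle_self[OF u] by simp
next
  case False
  have e: "E (Suc i) - E i = \<gamma> (T i) - \<gamma> (T (i - 1))" using Emid i False by simp
  have a: "T (i - 1) < T i" using gap_pos i False by simp
  have g: "T i - T (i - 1) \<le> \<theta>" using gap_le i False by simp
  have r: "0 \<le> T (i - 1)" "T i \<le> L" using Trange[of "i-1"] Trange[of i] i False by auto
  show ?thesis using False e chord_fwd(2)[OF adm r(1) a r(2)] g thpi by simp
qed

lemma hin_bound: "1 \<le> i \<Longrightarrow> i \<le> N \<Longrightarrow>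
   0 \<le> (if i = 1 then 0 else (T (i - 1) - T (i - 2))/2) \<and> (if i = 1 then 0 else (T (i - 1) - T (i - 2))/2) \<le> \<theta>/2"
proof (cases "i = 1")
  case False
  assume i: "1 \<le> i" "i \<le> N"
  then obtain k where k: "i = Suc (Suc k)" using False by (cases i; cases "i - 1") auto
  show ?thesis using gap_pos[of "Suc k"] gap_le[of "Suc k"] th0 i k by simp
qed (use th0 in auto)

lemma hout_bound: "1 \<le> i \<Longrightarrow> i \<le> N \<Longrightarrow>
   0 \<le> (if i = N then 0 else (T i - T (i - 1))/2) \<and> (if i = N then 0 else (T i - T (i - 1))/2) \<le> \<theta>/2"
  using gap_pos[of i] gap_le[of i] th0 by auto

lemma turn:
  assumes i: "1 \<le> i" "i \<le> N"
  shows "vec_angle (E i - E (i - 1)) (E (Suc i) - E i) \<le> \<theta>"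
proof -
  have u: "norm (D (T (i - 1))) = 1" using unitD Trange[of "i - 1"] i by auto
  have "vec_angle (E i - E (i - 1)) (E (Suc i) - E i)
     \<le> (if i = 1 then 0 else (T (i - 1) - T (i - 2))/2) + (if i = N then 0 else (T i - T (i - 1))/2)"
    using hin_bound[OF i] hout_bound[OF i] thpi
    by (intro ang[OF u in_cone[OF i] out_cone[OF i]]) auto
  then show ?thesis using hin_bound[OF i] hout_bound[OF i] by linarith
qed

end

lemma turn_all:
  assumes i: "1 \<le> i" "i \<le> N"
  shows "vec_angle (E i - E (i - 1)) (E (Suc i) - E i) \<le> \<theta>"
proof (cases "\<theta> < pi")
  case True then show ?thesis using turn i by blast
next
  case False then show ?thesis using vec_angle_le_pi[of "E i - E (i - 1)" "E (Suc i) - E i"] by linarith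
qed

lemma short_gap:
  assumes i: "i \<le> N" and sh: "norm (E (Suc i) - E i) < l"
  shows "1 \<le> i \<and> i + 1 \<le> N \<and> T i - T (i - 1) < \<theta>"
proof -
  have u0: "norm (D 0) = 1" using unitD L0 by auto
  have uN: "norm (D L) = 1" using unitD L0 by auto
  have "i \<noteq> 0"
  proof
    assume "i = 0"
    then have "norm (E 1 - E 0) < l" using sh by simp
    then show False unfolding E0 using u0 l_nonneg by simp
  qed
  moreover have "i \<noteq> N"
  proof
    assume "i = N"
    then have "norm (E (Suc N) - E N) < l" using sh by simp
    then show False unfolding EN using uN l_nonneg by simp
  qed
  ultimately have i1: "1 \<le> i" "i + 1 \<le> N" using i by auto
  have "T i - T (i - 1) \<noteq> \<theta>"
  proof
    assume g: "T i - T (i - 1) = \<theta>"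
    have "l \<le> norm (\<gamma> (T i) - \<gamma> (T (i - 1)))"
    proof (cases "l = 0")
      case True then show ?thesis by simp
    next
      case False
      then have "\<theta> \<le> pi" "l \<le> 2 * sin (\<theta>/2)" using lcase by auto
      moreover have "2 * sin ((T i - T (i - 1))/2) \<le> norm (\<gamma> (T i) - \<gamma> (T (i - 1)))"
        using Trange[of "i - 1"] Trange[of i] i1 gap_pos[OF i1] g \<open>\<theta> \<le> pi\<close>
        by (intro chord_len[OF adm]) auto
      ultimately show ?thesis using g by simp
    qed
    then show False using sh Emid[OF i1] by simp
  qed
  then show ?thesis using i1 gap_le[OF i1] by simp
qed

lemma mE: "j < N + 2 \<Longrightarrow> map E [0..<N + 2] ! j = E j"
  by (subst nth_map_upt) (auto simp del: upt_Suc)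

lemma ext_dccp0:
  assumes len: "length ps = N + 2" and pE: "\<And>j. j < N + 2 \<Longrightarrow> ps ! j = E j"
  shows "dccp \<theta> l ps"
  unfolding dccp_def
proof (intro conjI allI impI)
  fix i assume i: "0 < i \<and> i + 1 < length ps"
  then have "1 \<le> i" "i \<le> N" using len by auto
  then show "vec_angle (ps ! i - ps ! (i - 1))
                (ps ! (i + 1) - ps ! i) \<le> \<theta>"
    using turn_all[of i] i len pE[of i] pE[OF less_imp_diff_less[of i "N+2" 1]] pE[of "i + 1"] by simp
next
  fix i assume i: "i + 2 < length ps"
  show "\<not> (short_edge l (ps ! i) (ps ! (i + 1)) \<and>
          short_edge l (ps ! (i + 1)) (ps ! (i + 2)))"
  proof
    assume "short_edge l (ps ! i) (ps ! (i + 1)) \<and>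
          short_edge l (ps ! (i + 1)) (ps ! (i + 2))"
    then have s1: "norm (E (Suc i) - E i) < l" and s2: "norm (E (Suc (Suc i)) - E (Suc i)) < l"
      using i len pE[of i] pE[of "i + 1"] pE[of "i + 2"] by (auto simp: short_edge_def)
    have g1: "1 \<le> i" "T i - T (i - 1) < \<theta>" using short_gap[OF _ s1] i len by auto
    have g2: "i + 2 \<le> N" "T (Suc i) - T i < \<theta>" using short_gap[OF _ s2] i len by auto
    show False using Tadj[of "i - 1"] g1 g2 by simp
  qed
next
  fix i assume i: "0 < i \<and> i + 2 < length ps"
    and sh: "short_edge l (ps ! i) (ps ! (i + 1))"
  have s1: "norm (E (Suc i) - E i) < l" using sh i len pE[of i] pE[of "i + 1"] by (auto simp: short_edge_def)
  have g: "1 \<le> i" "i + 1 \<le> N" "T i - T (i - 1) < \<theta>" using short_gap[OF _ s1] i len by auto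
  have goal: "vec_angle (E i - E (i - 1)) (E (i + 2) - E (i + 1)) \<le> \<theta>"
  proof (cases "\<theta> < pi")
    case False then show ?thesis using vec_angle_le_pi[of "E i - E (i - 1)" "E (i + 2) - E (i + 1)"] by linarith
  next
    case thpi: True
    have ib: "i = 1 \<or> i + 1 = N"
    proof (rule ccontr)
      assume "\<not> (i = 1 \<or> i + 1 = N)"
      then have "0 < i - 1" "i - 1 + 2 < N" using g by auto
      then have "T (Suc (i - 1)) - T (i - 1) = \<theta>" by (rule Tint)
      then show False using g by simp
    qed
    show ?thesis
    proof (cases "i = 1")
      case True
      have u: "norm (D (T 1)) = 1" using unitD Trange[of 1] N3 by auto
      have u0: "norm (D 0) = 1" using unitD L0 by auto
      have gf: "2 * (T 1 - T 0) \<le> \<theta>" using Tfirst g True by simp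
      have "vec_angle (D (T 1)) (D 0) \<le> \<bar>0 - T 1\<bar>"
        using Trange[of 1] N3 gf T0 thpi th0 by (intro adm_angle[OF adm]) auto
      then have va: "vec_angle (D (T 1)) (D 0) \<le> T 1 - T 0" using T0 Trange[of 1] N3 by simp
      have c1: "incone (D (T 1)) (T 1 - T 0) (E 1 - E 0)"
        unfolding E0 using gf T0 Trange[of 1] N3 thpi by (intro virt[OF u u0 va _ _ lpos[OF thpi]]) auto
      have c2: "incone (D (T 1)) (if 2 = N then 0 else (T 2 - T 1)/2) (E 3 - E 2)"
        using out_cone[OF thpi, of 2] N3 by (simp add: numeral_3_eq_3 numeral_2_eq_2)
      have hb: "0 \<le> (if 2 = N then 0 else (T 2 - T 1)/2) \<and> (if 2 = N then 0 else (T 2 - T 1)/2) \<le> \<theta>/2"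
        using hout_bound[OF thpi, of 2] N3 by simp
      have "vec_angle (E 1 - E 0) (E 3 - E 2) \<le> (T 1 - T 0) + (if 2 = N then 0 else (T 2 - T 1)/2)"
        using gf hb thpi T0 Trange[of 1] N3 by (intro ang[OF u c1 c2]) auto
      then show ?thesis using True hb gf by (simp add: numeral_3_eq_3 numeral_2_eq_2)
    next
      case False
      then have iN: "i = N - 1" "2 \<le> i" using ib g by auto
      define k where "k = i - 2"
      have k: "i = Suc (Suc k)" "N = Suc (Suc (Suc k))" using iN g by (auto simp: k_def)
      have u: "norm (D (T (Suc k))) = 1" using unitD Trange[of "Suc k"] k by auto
      have uL: "norm (D L) = 1" using unitD L0 by auto
      have gl: "2 * (T (Suc (Suc k)) - T (Suc k)) \<le> \<theta>"
        using Tlast g k by simp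
      have le: "T (Suc k) \<le> L" "0 \<le> T (Suc k)" using Trange[of "Suc k"] k by auto
      have TN': "T (Suc (Suc k)) = L" using TN k by simp
      have "vec_angle (D (T (Suc k))) (D L) \<le> \<bar>L - T (Suc k)\<bar>"
        using le gl TN' thpi th0 L0 by (intro adm_angle[OF adm]) auto
      then have va: "vec_angle (D (T (Suc k))) (D L) \<le> T (Suc (Suc k)) - T (Suc k)" using TN' le by simp
      have gp: "T (Suc k) < T (Suc (Suc k))" using gap_pos[of "Suc (Suc k)"] k by simp
      have c2: "incone (D (T (Suc k))) (T (Suc (Suc k)) - T (Suc k)) (E (i + 2) - E (i + 1))"
      proof -
        have "E (i + 2) - E (i + 1) = l *\<^sub>R D L" using EN k by simp
        then show ?thesis using gl gp thpi
          by (simp, intro virt[OF u uL va _ _ lpos[OF thpi]]) auto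
      qed
      have c1: "incone (D (T (Suc k))) ((T (Suc k) - T k)/2) (E i - E (i - 1))"
        using in_cone[OF thpi, of i] k by simp
      have hb: "0 \<le> (T (Suc k) - T k)/2 \<and> (T (Suc k) - T k)/2 \<le> \<theta>/2"
        using hin_bound[OF thpi, of i] k by simp
      have "vec_angle (E i - E (i - 1)) (E (i + 2) - E (i + 1)) \<le> (T (Suc k) - T k)/2 + (T (Suc (Suc k)) - T (Suc k))"
        using gl hb thpi gp by (intro ang[OF u c1 c2]) auto
      moreover have "(T (Suc k) - T k)/2 + (T (Suc (Suc k)) - T (Suc k)) \<le> \<theta>"
        using conjunct2[OF hb] gl by (smt (verit) field_sum_of_halves)
      ultimately show ?thesis by (rule order_trans)
    qed
  qed
  show "vec_angle (ps ! i - ps ! (i - 1))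
          (ps ! (i + 2) - ps ! (i + 1)) \<le> \<theta>"
    using goal i len pE[of i] pE[OF less_imp_diff_less[of i "N+2" 1]] pE[of "i + 1"] pE[of "i + 2"] by simp
qed

lemma ext_dccp: "dccp \<theta> l (map E [0..<N+2])"
  by (rule ext_dccp0) (auto simp: mE simp del: upt_Suc)

end

definition goodT :: "real \<Rightarrow> real \<Rightarrow> (nat \<Rightarrow> real) \<Rightarrow> nat \<Rightarrow> bool" where
  "goodT \<theta> L T N \<longleftrightarrow> 3 \<le> N \<and> T 0 = 0 \<and> T (N - 1) = L
    \<and> (\<forall>j. j + 1 < N \<longrightarrow> T j < T (Suc j))
    \<and> (\<forall>j. j + 1 < N \<longrightarrow> T (Suc j) - T j \<le> \<theta>)
    \<and> (\<forall>j. 0 < j \<longrightarrow> j + 2 < N \<longrightarrow> T (Suc j) - T j = \<theta>)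
    \<and> (\<forall>j. j + 2 < N \<longrightarrow> T (Suc j) - T j = \<theta> \<or> T (Suc (Suc j)) - T (Suc j) = \<theta>)
    \<and> (T 1 - T 0 < \<theta> \<longrightarrow> 2 * (T 1 - T 0) \<le> \<theta>)
    \<and> (T (N - 1) - T (N - 2) < \<theta> \<longrightarrow> 2 * (T (N - 1) - T (N - 2)) \<le> \<theta>)
    \<and> (\<forall>j. j < N \<longrightarrow> 0 \<le> T j \<and> T j \<le> L)"

lemma disc_T:
  assumes th: "0 < \<theta>" "\<theta> < L"
  shows "\<exists>T N. discretization \<theta> L \<gamma> = map (\<lambda>i. \<gamma> (T i)) [0..<N] \<and> goodT \<theta> L T N"
proof -
  define m where "m = nat \<lfloor>L / \<theta>\<rfloor>"
  define \<delta> where "\<delta> = L - real m * \<theta>"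
  have q: "1 < L / \<theta>" using th by simp
  have fl: "1 \<le> \<lfloor>L / \<theta>\<rfloor>" using q by linarith
  have rm: "real m = real_of_int \<lfloor>L / \<theta>\<rfloor>" using fl by (simp add: m_def)
  have "(1::real) \<le> real m" using rm fl by (metis of_int_1 of_int_le_iff)
  then have m1: "1 \<le> m" by simp
  have "real m \<le> L / \<theta>" "L / \<theta> < real m + 1" using rm by linarith+
  then have mL: "real m * \<theta> \<le> L" "L < (real m + 1) * \<theta>" using th by (simp_all add: field_simps)
  have d0: "0 \<le> \<delta>" "\<delta> < \<theta>" using mL by (auto simp: \<delta>_def algebra_simps)
  have disc: "discretization \<theta> L \<gamma> = (if \<delta> = 0 then map (\<lambda>i. \<gamma> (real i * \<theta>)) [0..<m+1]
      else [\<gamma> 0] @ map (\<lambda>i. \<gamma> (\<delta> / 2 + real i * \<theta>)) [0..<m+1] @ [\<gamma> L])"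
    by (simp add: discretization_def m_def \<delta>_def Let_def)
  show ?thesis
  proof (cases "\<delta> = 0")
    case True
    have Lm: "L = real m * \<theta>" using True by (simp add: \<delta>_def)
    have m2: "2 \<le> m"
    proof (rule ccontr)
      assume "\<not> 2 \<le> m" then have "m = 1" using m1 by simp
      then show False using Lm th by simp
    qed
    define T where "T = (\<lambda>i::nat. real i * \<theta>)"
    have "goodT \<theta> L T (m + 1)"
      unfolding goodT_def T_def using m2 th Lm
      by (auto simp: algebra_simps mult_left_mono)
    moreover have "discretization \<theta> L \<gamma> = map (\<lambda>i. \<gamma> (T i)) [0..<m+1]"
      using disc True by (simp add: T_def)
    ultimately show ?thesis by blast
  next
    case False
    then have dp: "0 < \<delta>" using d0 by simp
    define T where "T = (\<lambda>i::nat. if i = 0 then 0 else if i \<le> m + 1 then \<delta>/2 + real (i - 1) * \<theta> else L)"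
    have Lm: "L = real m * \<theta> + \<delta>" by (simp add: \<delta>_def)
    have gap: "T (Suc j) - T j = (if j = 0 \<or> j = m + 1 then \<delta>/2 else \<theta>)" if "j \<le> m + 1" for j
      using that Lm by (cases "j = m + 1") (auto simp: T_def algebra_simps)
    have rng: "0 \<le> T j \<and> T j \<le> L" if "j < m + 3" for j
    proof (cases "1 \<le> j \<and> j \<le> m + 1")
      case True
      then have "real (j - 1) \<le> real m" by simp
      then have "real (j - 1) * \<theta> \<le> real m * \<theta>" using th by (intro mult_right_mono) auto
      moreover have "0 \<le> real (j - 1) * \<theta>" using th by simp
      moreover have Tj: "T j = \<delta>/2 + real (j - 1) * \<theta>" using True by (simp add: T_def)
      ultimately show ?thesis using dp Lm d0 by (intro conjI; linarith)
    next
      case False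
      then show ?thesis using that th dp Lm d0 mL by (auto simp: T_def)
    qed
    have "goodT \<theta> L T (m + 3)"
      unfolding goodT_def
    proof (intro conjI allI impI)
      show "3 \<le> m + 3" by simp
      show "T 0 = 0" by (simp add: T_def)
      show "T (m + 3 - 1) = L" by (simp add: T_def)
      fix j
      { assume "j + 1 < m + 3" then show "T j < T (Suc j)" using gap[of j] dp th by (auto split: if_splits) }
      { assume "j + 1 < m + 3" then show "T (Suc j) - T j \<le> \<theta>" using gap[of j] d0 th by auto }
      { assume "0 < j" "j + 2 < m + 3" then show "T (Suc j) - T j = \<theta>" using gap[of j] by auto }
      { assume "j + 2 < m + 3" then show "T (Suc j) - T j = \<theta> \<or> T (Suc (Suc j)) - T (Suc j) = \<theta>"
          using gap[of j] gap[of "Suc j"] m1 by (cases j) auto }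
      { assume "j < m + 3" then show "0 \<le> T j" "T j \<le> L" using rng[of j] by auto }
    next
      show "T 1 - T 0 < \<theta> \<Longrightarrow> 2 * (T 1 - T 0) \<le> \<theta>" using gap[of 0] d0 by simp
      show "T (m + 3 - 1) - T (m + 3 - 2) < \<theta> \<Longrightarrow> 2 * (T (m + 3 - 1) - T (m + 3 - 2)) \<le> \<theta>"
        using gap[of "m + 1"] d0 by (simp add: numeral_3_eq_3 numeral_2_eq_2)
    qed
    moreover have "discretization \<theta> L \<gamma> = map (\<lambda>i. \<gamma> (T i)) [0..<m+3]"
    proof (rule nth_equalityI)
      show "length (discretization \<theta> L \<gamma>) = length (map (\<lambda>i. \<gamma> (T i)) [0..<m+3])"
        using disc False by simp
      fix i assume "i < length (discretization \<theta> L \<gamma>)"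
      then have i: "i < m + 3" using disc False by simp
      show "discretization \<theta> L \<gamma> ! i = map (\<lambda>i. \<gamma> (T i)) [0..<m+3] ! i"
      proof -
        have r: "map (\<lambda>i. \<gamma> (T i)) [0..<m+3] ! i = \<gamma> (T i)" using i by (simp del: upt_Suc)
        consider "i = 0" | "1 \<le> i \<and> i \<le> m + 1" | "i = m + 2" using i by linarith
        then show ?thesis
        proof cases
          case 1 then show ?thesis using r disc False by (simp add: T_def)
        next
          case 2
          then obtain k where k: "i = Suc k" "k \<le> m" by (cases i) auto
          then have "discretization \<theta> L \<gamma> ! i = \<gamma> (\<delta> / 2 + real k * \<theta>)"
            using disc False by (simp add: nth_append del: upt_Suc)
          then have "discretization \<theta> L \<gamma> ! i = \<gamma> (\<delta> / 2 + real (i - 1) * \<theta>)"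
            using k by simp
          then show ?thesis using r 2 by (simp add: T_def)
        next
          case 3 then show ?thesis using r disc False by (simp add: T_def nth_append del: upt_Suc)
        qed
      qed
    qed
    ultimately show ?thesis by blast
  qed
qed

theorem lemma17:
  fixes L :: real and \<gamma> D :: "real \<Rightarrow> real^2" and n :: nat
  assumes "admissible L \<gamma> D"
    and "0 < n"
    and "2 * pi / real n < L"
  shows "dccp (2 * pi / real n) (2 * sin (pi / real n)) (discretization (2 * pi / real n) L \<gamma>)
       \<and> starts_at (2 * pi / real n) (2 * sin (pi / real n)) (discretization (2 * pi / real n) L \<gamma>)
           (\<gamma> 0) ((2 * sin (pi / real n)) *\<^sub>R D 0)
       \<and> ends_at (2 * pi / real n) (2 * sin (pi / real n)) (discretization (2 * pi / real n) L \<gamma>)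
           (\<gamma> L) ((2 * sin (pi / real n)) *\<^sub>R D L)"
proof -
  define \<theta> where "\<theta> = 2 * pi / real n"
  define l where "l = 2 * sin (pi / real n)"
  have adm: "admissible L \<gamma> D" by fact
  have th0: "0 < \<theta>" using assms(2) by (simp add: \<theta>_def)
  have thL: "\<theta> < L" using assms(3) by (simp add: \<theta>_def)
  have half: "\<theta> / 2 = pi / real n" by (simp add: \<theta>_def)
  have lcase: "l = 0 \<or> (\<theta> \<le> pi \<and> 0 < l \<and> l \<le> 2 * sin (\<theta>/2))"
   and l0: "l = 0 \<Longrightarrow> pi \<le> \<theta>"
  proof -
    show "l = 0 \<or> (\<theta> \<le> pi \<and> 0 < l \<and> l \<le> 2 * sin (\<theta>/2))"
    proof (cases "n = 1")
      case True then show ?thesis by (simp add: l_def)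
    next
      case False
      then have n2: "2 \<le> real n" using assms(2) by linarith
      then have "pi / real n \<le> pi / 2" by (intro divide_left_mono) auto
      moreover have "0 < pi / real n" using assms(2) by simp
      moreover have "pi / 2 < pi" using pi_gt_zero by linarith
      ultimately have "0 < sin (pi / real n)" by (intro sin_gt_zero) linarith+
      moreover have "\<theta> \<le> pi" using n2 by (simp add: \<theta>_def field_simps)
      ultimately show ?thesis by (simp add: l_def half)
    qed
    show "pi \<le> \<theta>" if "l = 0"
    proof (cases "n = 1")
      case True then show ?thesis by (simp add: \<theta>_def)
    next
      case False
      then have n2: "2 \<le> real n" using assms(2) by linarith
      then have "pi / real n \<le> pi / 2" by (intro divide_left_mono) auto
      moreover have "0 < pi / real n" using assms(2) by simp
      moreover have "pi / 2 < pi" using pi_gt_zero by linarith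
      ultimately have "0 < sin (pi / real n)" by (intro sin_gt_zero) linarith+
      then show ?thesis using that by (simp add: l_def)
    qed
  qed
  obtain T N where disc: "discretization \<theta> L \<gamma> = map (\<lambda>i. \<gamma> (T i)) [0..<N]" and g: "goodT \<theta> L T N"
    using disc_T[OF th0 thL] by blast
  define E where "E = (\<lambda>i. if i = 0 then \<gamma> 0 - l *\<^sub>R D 0 else if i \<le> N then \<gamma> (T (i - 1))
                      else \<gamma> L + l *\<^sub>R D L)"
  define ps where "ps = map (\<lambda>i. \<gamma> (T i)) [0..<N]"
  have ext: "dccp \<theta> l (map E [0..<N+2])"
    using g unfolding goodT_def
    by (intro ext_dccp[OF adm th0 _ _ _ _ _ _ _ _ _ _ lcase l0 E_def]) auto
  have N3: "3 \<le> N" and T0: "T 0 = 0" and TN: "T (N - 1) = L" using g by (auto simp: goodT_def)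
  have eq: "map E [0..<N+2] = ((\<gamma> 0 - l *\<^sub>R D 0) # ps) @ [\<gamma> L + l *\<^sub>R D L]"
  proof (rule nth_equalityI)
    show "length (map E [0..<N+2]) = length (((\<gamma> 0 - l *\<^sub>R D 0) # ps) @ [\<gamma> L + l *\<^sub>R D L])"
      by (simp add: ps_def)
    fix i assume "i < length (map E [0..<N+2])"
    then have i: "i < N + 2" by simp
    have r: "map E [0..<N+2] ! i = E i" using i by (subst nth_map_upt) (auto simp del: upt_Suc)
    consider "i = 0" | "1 \<le> i \<and> i \<le> N" | "i = N + 1" using i by linarith
    then show "map E [0..<N+2] ! i = (((\<gamma> 0 - l *\<^sub>R D 0) # ps) @ [\<gamma> L + l *\<^sub>R D L]) ! i"
    proof cases
      case 1 then show ?thesis using r by (simp add: E_def)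
    next
      case 2
      then obtain k where k: "i = Suc k" "k < N" by (cases i) auto
      then show ?thesis using r by (simp add: E_def ps_def nth_append del: upt_Suc)
    next
      case 3 then show ?thesis using r by (simp add: E_def ps_def nth_append del: upt_Suc)
    qed
  qed
  have d1: "dccp \<theta> l ((\<gamma> 0 - l *\<^sub>R D 0) # ps)" using ext eq dccp_butlast by metis
  have d2: "dccp \<theta> l (ps @ [\<gamma> L + l *\<^sub>R D L])" using ext eq dccp_tl by (metis append_Cons)
  have d3: "dccp \<theta> l ps" using d1 dccp_tl by metis
  have ne: "ps \<noteq> []" using N3 by (simp add: ps_def)
  have hd: "hd ps = \<gamma> 0" using N3 T0 by (simp add: ps_def hd_map)
  have lst: "last ps = \<gamma> L" using N3 TN by (simp add: ps_def last_map)
  have "dccp \<theta> l ps \<and> starts_at \<theta> l ps (\<gamma> 0) (l *\<^sub>R D 0) \<and> ends_at \<theta> l ps (\<gamma> L) (l *\<^sub>R D L)"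
    using d1 d2 d3 ne hd lst by (simp add: starts_at_def ends_at_def)
  moreover have "discretization \<theta> L \<gamma> = ps" by (simp add: disc ps_def)
  ultimately show ?thesis unfolding \<theta>_def l_def by simp
qed

end
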